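(* Let $M$ be a graded quasi-primaryful $R$-module and $Y\subseteq qp.Spec_g(M)$. Then $Y$ is an irreducible closed subset of $qp.Spec_g(M)$ (quasi-Zariski topology) if and only if $Y=qp\text{-}V_M^g(Q)$ for some $Q\in qp.Spec_g(M)$. In particular, every irreducible closed subset of $qp.Spec_g(M)$ has a generic point.
   Context: $R=\bigoplus_{g\in G}R_g$ is a graded commutative ring with identity graded by a group $G$, $h(R)=\bigcup_g R_g$; $M$ is a graded $R$-module, $h(M)$ its homogeneous elements. $Gr(I)$ is the graded radical of a graded ideal $I$. $(K:_RM)=\{r: rM\subseteq K\}$. Graded prime submodule: proper graded $P$ with $rm\in P$ ($r\in h(R), m\in h(M)$) implying $m\in P$ or $r\in(P:_RM)$. $Gr_M(K)$: intersection of graded prime submodules containing $K$ ($M$ if none). Graded primeful property of $K$: for each graded prime $p\supseteq(K:_RM)$ there is a graded prime submodule $P\supseteq K$ with $(P:_RM)=p$. Graded quasi-primary submodule: proper graded $Q$ with $rm\in Q$ ($r\in h(R),m\in h(M)$) implying $r\in Gr((Q:_RM))$ or $m\in Gr_M(Q)$. $qp.Spec_g(M)$: graded quasi-primary submodules with the graded primeful property. $qp\text{-}V_M^g(K)=\{Q\in qp.Spec_g(M): Gr((Q:_RM))\supseteq Gr((K:_RM))\}$; the quasi-Zariski topology has closed sets exactly these. A graded quasi-primary ideal of $R$ is a proper graded ideal $q$ with $ab\in q$ ($a,b\in h(R)$) implying $a\in Gr(q)$ or $b\in Gr(q)$. $M$ is graded quasi-primaryful if $M=0$, or $M\ne 0$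 and for every graded quasi-primary ideal $q\supseteq\mathrm{Ann}(M)$ of $R$ there is $Q\in qp.Spec_g(M)$ with $Gr((Q:_RM))=Gr(q)$. A subset $A$ of a topological space is irreducible if whenever $A\subseteq A_1\cup A_2$ with $A_1,A_2$ closed, then $A\subseteq A_1$ or $A\subseteq A_2$. A generic point of a closed set $Y$ is $y\in Y$ with $Y=cl(\{y\})$. *)

theory Defs
  imports Complex_Main
begin

definition add_subgroup :: "'a::ab_group_add set \<Rightarrow> bool" where
  "add_subgroup S \<longleftrightarrow> 0 \<in> S \<and> (\<forall>x\<in>S. \<forall>y\<in>S. x + y \<in> S) \<and> (\<forall>x\<in>S. - x \<in> S)"

definition gdecomp :: "('g \<Rightarrow> 'a::comm_monoid_add set) \<Rightarrow> 'a \<Rightarrow> ('g \<Rightarrow> 'a) \<Rightarrow> bool" where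
  "gdecomp A x c \<longleftrightarrow> finite {g. c g \<noteq> 0} \<and> (\<forall>g. c g \<in> A g) \<and> x = (\<Sum>g\<in>{g. c g \<noteq> 0}. c g)"

definition direct_grading :: "('g \<Rightarrow> 'a::ab_group_add set) \<Rightarrow> bool" where
  "direct_grading A \<longleftrightarrow> (\<forall>g. add_subgroup (A g)) \<and> (\<forall>x. \<exists>!c. gdecomp A x c)"

definition gcomp :: "('g \<Rightarrow> 'a::comm_monoid_add set) \<Rightarrow> 'a \<Rightarrow> 'g \<Rightarrow> 'a" where
  "gcomp A x g = (THE c. gdecomp A x c) g"

definition homog :: "('g \<Rightarrow> 'a set) \<Rightarrow> 'a set" where
  "homog A = (\<Union>g. A g)"

text \<open>R (the whole type 'r) is a G-graded commutative ring with identity.\<close>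
definition graded_ring :: "('g::group_add \<Rightarrow> 'r::comm_ring_1 set) \<Rightarrow> bool" where
  "graded_ring Rg \<longleftrightarrow> direct_grading Rg \<and>
     (\<forall>g h a b. a \<in> Rg g \<longrightarrow> b \<in> Rg h \<longrightarrow> a * b \<in> Rg (g + h))"

text \<open>M (the whole type 'm) is a G-graded R-module with scalar multiplication smult.\<close>
definition graded_module ::
  "('g::group_add \<Rightarrow> 'r::comm_ring_1 set) \<Rightarrow> ('g \<Rightarrow> 'm::ab_group_add set) \<Rightarrow> ('r \<Rightarrow> 'm \<Rightarrow> 'm) \<Rightarrow> bool" where
  "graded_module Rg Mg smult \<longleftrightarrow> graded_ring Rg \<and> module smult \<and> direct_grading Mg \<and>
     (\<forall>g h r m. r \<in> Rg g \<longrightarrow> m \<in> Mg h \<longrightarrow> smult r m \<in> Mg (g + h))"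

definition is_ideal :: "'r::comm_ring_1 set \<Rightarrow> bool" where
  "is_ideal I \<longleftrightarrow> add_subgroup I \<and> (\<forall>r x. x \<in> I \<longrightarrow> r * x \<in> I)"

definition graded_ideal :: "('g \<Rightarrow> 'r::comm_ring_1 set) \<Rightarrow> 'r set \<Rightarrow> bool" where
  "graded_ideal Rg I \<longleftrightarrow> is_ideal I \<and> (\<forall>x\<in>I. \<forall>g. gcomp Rg x g \<in> I)"

definition is_submodule :: "('r::comm_ring_1 \<Rightarrow> 'm::ab_group_add \<Rightarrow> 'm) \<Rightarrow> 'm set \<Rightarrow> bool" where
  "is_submodule smult N \<longleftrightarrow> add_subgroup N \<and> (\<forall>r x. x \<in> N \<longrightarrow> smult r x \<in> N)"

definition graded_submodule ::
  "('g \<Rightarrow> 'm::ab_group_add set) \<Rightarrow> ('r::comm_ring_1 \<Rightarrow> 'm \<Rightarrow> 'm) \<Rightarrow> 'm set \<Rightarrow> bool" where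
  "graded_submodule Mg smult N \<longleftrightarrow> is_submodule smult N \<and> (\<forall>x\<in>N. \<forall>g. gcomp Mg x g \<in> N)"

definition colon :: "('r \<Rightarrow> 'm \<Rightarrow> 'm) \<Rightarrow> 'm set \<Rightarrow> 'r set" where
  "colon smult K = {r. \<forall>m. smult r m \<in> K}"

definition Gr :: "('g \<Rightarrow> 'r::comm_ring_1 set) \<Rightarrow> 'r set \<Rightarrow> 'r set" where
  "Gr Rg I = {x. \<forall>g. \<exists>n>0. (gcomp Rg x g) ^ n \<in> I}"

definition graded_prime_ideal :: "('g \<Rightarrow> 'r::comm_ring_1 set) \<Rightarrow> 'r set \<Rightarrow> bool" where
  "graded_prime_ideal Rg p \<longleftrightarrow> graded_ideal Rg p \<and> p \<noteq> UNIV \<and>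
     (\<forall>a\<in>homog Rg. \<forall>b\<in>homog Rg. a * b \<in> p \<longrightarrow> a \<in> p \<or> b \<in> p)"

definition graded_quasi_primary_ideal :: "('g \<Rightarrow> 'r::comm_ring_1 set) \<Rightarrow> 'r set \<Rightarrow> bool" where
  "graded_quasi_primary_ideal Rg q \<longleftrightarrow> graded_ideal Rg q \<and> q \<noteq> UNIV \<and>
     (\<forall>a\<in>homog Rg. \<forall>b\<in>homog Rg. a * b \<in> q \<longrightarrow> a \<in> Gr Rg q \<or> b \<in> Gr Rg q)"

definition graded_prime_submodule ::
  "('g \<Rightarrow> 'r::comm_ring_1 set) \<Rightarrow> ('g \<Rightarrow> 'm::ab_group_add set) \<Rightarrow> ('r \<Rightarrow> 'm \<Rightarrow> 'm) \<Rightarrow> 'm set \<Rightarrow> bool" where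
  "graded_prime_submodule Rg Mg smult P \<longleftrightarrow> graded_submodule Mg smult P \<and> P \<noteq> UNIV \<and>
     (\<forall>r\<in>homog Rg. \<forall>m\<in>homog Mg. smult r m \<in> P \<longrightarrow> m \<in> P \<or> r \<in> colon smult P)"

text \<open>Gr_M(K): intersection of graded prime submodules containing K (UNIV if none).\<close>
definition GrM ::
  "('g \<Rightarrow> 'r::comm_ring_1 set) \<Rightarrow> ('g \<Rightarrow> 'm::ab_group_add set) \<Rightarrow> ('r \<Rightarrow> 'm \<Rightarrow> 'm) \<Rightarrow> 'm set \<Rightarrow> 'm set" where
  "GrM Rg Mg smult K = \<Inter> {P. graded_prime_submodule Rg Mg smult P \<and> K \<subseteq> P}"

definition graded_primeful ::
  "('g \<Rightarrow> 'r::comm_ring_1 set) \<Rightarrow> ('g \<Rightarrow> 'm::ab_group_add set) \<Rightarrow> ('r \<Rightarrow> 'm \<Rightarrow> 'm) \<Rightarrow> 'm set \<Rightarrow> bool" where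
  "graded_primeful Rg Mg smult K \<longleftrightarrow>
     (\<forall>p. graded_prime_ideal Rg p \<and> colon smult K \<subseteq> p \<longrightarrow>
        (\<exists>P. graded_prime_submodule Rg Mg smult P \<and> K \<subseteq> P \<and> colon smult P = p))"

definition graded_quasi_primary_submodule ::
  "('g \<Rightarrow> 'r::comm_ring_1 set) \<Rightarrow> ('g \<Rightarrow> 'm::ab_group_add set) \<Rightarrow> ('r \<Rightarrow> 'm \<Rightarrow> 'm) \<Rightarrow> 'm set \<Rightarrow> bool" where
  "graded_quasi_primary_submodule Rg Mg smult Q \<longleftrightarrow> graded_submodule Mg smult Q \<and> Q \<noteq> UNIV \<and>
     (\<forall>r\<in>homog Rg. \<forall>m\<in>homog Mg. smult r m \<in> Q \<longrightarrow>
        r \<in> Gr Rg (colon smult Q) \<or> m \<in> GrM Rg Mg smult Q)"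

definition qpSpec ::
  "('g \<Rightarrow> 'r::comm_ring_1 set) \<Rightarrow> ('g \<Rightarrow> 'm::ab_group_add set) \<Rightarrow> ('r \<Rightarrow> 'm \<Rightarrow> 'm) \<Rightarrow> 'm set set" where
  "qpSpec Rg Mg smult = {Q. graded_quasi_primary_submodule Rg Mg smult Q \<and> graded_primeful Rg Mg smult Q}"

definition qpV ::
  "('g \<Rightarrow> 'r::comm_ring_1 set) \<Rightarrow> ('g \<Rightarrow> 'm::ab_group_add set) \<Rightarrow> ('r \<Rightarrow> 'm \<Rightarrow> 'm) \<Rightarrow> 'm set \<Rightarrow> 'm set set" where
  "qpV Rg Mg smult K = {Q \<in> qpSpec Rg Mg smult. Gr Rg (colon smult K) \<subseteq> Gr Rg (colon smult Q)}"

definition qp_closed ::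
  "('g \<Rightarrow> 'r::comm_ring_1 set) \<Rightarrow> ('g \<Rightarrow> 'm::ab_group_add set) \<Rightarrow> ('r \<Rightarrow> 'm \<Rightarrow> 'm) \<Rightarrow> 'm set set \<Rightarrow> bool" where
  "qp_closed Rg Mg smult Y \<longleftrightarrow> (\<exists>K. graded_submodule Mg smult K \<and> Y = qpV Rg Mg smult K)"

definition qp_closure ::
  "('g \<Rightarrow> 'r::comm_ring_1 set) \<Rightarrow> ('g \<Rightarrow> 'm::ab_group_add set) \<Rightarrow> ('r \<Rightarrow> 'm \<Rightarrow> 'm) \<Rightarrow> 'm set set \<Rightarrow> 'm set set" where
  "qp_closure Rg Mg smult A = \<Inter> {Y. qp_closed Rg Mg smult Y \<and> A \<subseteq> Y}"

definition qp_irreducible ::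
  "('g \<Rightarrow> 'r::comm_ring_1 set) \<Rightarrow> ('g \<Rightarrow> 'm::ab_group_add set) \<Rightarrow> ('r \<Rightarrow> 'm \<Rightarrow> 'm) \<Rightarrow> 'm set set \<Rightarrow> bool" where
  "qp_irreducible Rg Mg smult A \<longleftrightarrow> A \<noteq> {} \<and>
     (\<forall>A1 A2. qp_closed Rg Mg smult A1 \<and> qp_closed Rg Mg smult A2 \<and> A \<subseteq> A1 \<union> A2 \<longrightarrow>
        A \<subseteq> A1 \<or> A \<subseteq> A2)"

definition quasi_primaryful ::
  "('g \<Rightarrow> 'r::comm_ring_1 set) \<Rightarrow> ('g \<Rightarrow> 'm::ab_group_add set) \<Rightarrow> ('r \<Rightarrow> 'm \<Rightarrow> 'm) \<Rightarrow> bool" where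
  "quasi_primaryful Rg Mg smult \<longleftrightarrow> (UNIV :: 'm set) = {0} \<or>
     ((UNIV :: 'm set) \<noteq> {0} \<and>
      (\<forall>q. graded_quasi_primary_ideal Rg q \<and> colon smult {0} \<subseteq> q \<longrightarrow>
         (\<exists>Q\<in>qpSpec Rg Mg smult. Gr Rg (colon smult Q) = Gr Rg q)))"

end

theory Submission
  imports Defs
begin

lemma add_subgroup_sum:
  assumes "add_subgroup N" "\<And>i. i \<in> S \<Longrightarrow> f i \<in> N"
  shows "sum f S \<in> N"
  using assms(2)
proof (induction S rule: infinite_finite_induct)
  case (infinite S) then show ?case using assms(1) by (simp add: add_subgroup_def)
next
  case empty then show ?case using assms(1) by (simp add: add_subgroup_def)
next
  case (insert x F) then show ?case using assms(1) by (simp add: add_subgroup_def)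
qed

lemma gcomp_gdecomp:
  assumes "direct_grading A"
  shows "gdecomp A x (gcomp A x)"
proof -
  from assms have ex: "\<exists>!c. gdecomp A x c" by (simp add: direct_grading_def)
  have "gcomp A x = (THE c. gdecomp A x c)" by (rule ext) (simp add: gcomp_def)
  then show ?thesis using theI'[OF ex] by simp
qed

lemma gcomp_unique:
  assumes "direct_grading A" "gdecomp A x c"
  shows "gcomp A x = c"
proof -
  from assms have ex: "\<exists>!c. gdecomp A x c" by (simp add: direct_grading_def)
  have "gcomp A x = (THE c. gdecomp A x c)" by (rule ext) (simp add: gcomp_def)
  also have "\<dots> = c" using ex assms(2) by blast
  finally show ?thesis .
qed

lemma gcomp_in: "direct_grading A \<Longrightarrow> gcomp A x g \<in> A g"
  using gcomp_gdecomp[of A x] by (simp add: gdecomp_def)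

lemma gcomp_finite: "direct_grading A \<Longrightarrow> finite {g. gcomp A x g \<noteq> 0}"
  using gcomp_gdecomp[of A x] by (simp add: gdecomp_def)

lemma gcomp_sum:
  assumes "direct_grading A" "finite S" "{g. gcomp A x g \<noteq> 0} \<subseteq> S"
  shows "x = (\<Sum>g\<in>S. gcomp A x g)"
proof -
  have "x = (\<Sum>g\<in>{g. gcomp A x g \<noteq> 0}. gcomp A x g)"
    using gcomp_gdecomp[OF assms(1), of x] by (simp add: gdecomp_def)
  also have "\<dots> = (\<Sum>g\<in>S. gcomp A x g)"
    by (rule sum.mono_neutral_left) (use assms in auto)
  finally show ?thesis .
qed

lemma gcomp_sum0:
  assumes "direct_grading A"
  shows "x = (\<Sum>g\<in>{g. gcomp A x g \<noteq> 0}. gcomp A x g)"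
  using gcomp_sum[OF assms gcomp_finite[OF assms]] by simp

lemma gcomp_eqI:
  assumes "direct_grading A" "finite S" "{g. c g \<noteq> 0} \<subseteq> S" "\<And>g. c g \<in> A g"
    "x = (\<Sum>g\<in>S. c g)"
  shows "gcomp A x = c"
proof (rule gcomp_unique[OF assms(1)])
  have fin: "finite {g. c g \<noteq> 0}" using assms(2,3) finite_subset by blast
  have "(\<Sum>g\<in>S. c g) = (\<Sum>g\<in>{g. c g \<noteq> 0}. c g)"
    by (rule sum.mono_neutral_right) (use assms in auto)
  then show "gdecomp A x c" using fin assms(4,5) by (simp add: gdecomp_def)
qed

lemma gcomp_add:
  assumes "direct_grading A"
  shows "gcomp A (x + y) = (\<lambda>g. gcomp A x g + gcomp A y g)"
proof -
  let ?S = "{g. gcomp A x g \<noteq> 0} \<union> {g. gcomp A y g \<noteq> 0}"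
  have fS: "finite ?S" using gcomp_finite[OF assms] by simp
  have ex: "x = (\<Sum>g\<in>?S. gcomp A x g)" by (rule gcomp_sum[OF assms fS]) auto
  have ey: "y = (\<Sum>g\<in>?S. gcomp A y g)" by (rule gcomp_sum[OF assms fS]) auto
  show ?thesis
  proof (rule gcomp_eqI[OF assms fS])
    show "{g. gcomp A x g + gcomp A y g \<noteq> 0} \<subseteq> ?S" by auto
    show "gcomp A x g + gcomp A y g \<in> A g" for g
      using assms gcomp_in[OF assms] by (auto simp: direct_grading_def add_subgroup_def)
    show "x + y = (\<Sum>g\<in>?S. gcomp A x g + gcomp A y g)"
      by (subst sum.distrib) (rule arg_cong2[where f="(+)", OF ex ey])
  qed
qed

lemma gcomp_homog:
  assumes "direct_grading A" "x \<in> A h"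
  shows "gcomp A x = (\<lambda>g. if g = h then x else 0)"
proof (rule gcomp_eqI[OF assms(1), of "{h}"])
  show "(if g = h then x else 0) \<in> A g" for g
    using assms by (auto simp: direct_grading_def add_subgroup_def)
qed auto

lemma gcomp_zero:
  assumes "direct_grading A"
  shows "gcomp A 0 g = 0"
proof -
  have "0 \<in> A g" using assms by (auto simp: direct_grading_def add_subgroup_def)
  then show ?thesis using gcomp_homog[OF assms, of 0 g] by simp
qed


locale GM =
  fixes Rg :: "'g::group_add \<Rightarrow> 'r::comm_ring_1 set"
    and Mg :: "'g \<Rightarrow> 'm::ab_group_add set"
    and smult :: "'r \<Rightarrow> 'm \<Rightarrow> 'm"
  assumes gm: "graded_module Rg Mg smult"
begin

lemma gR: "graded_ring Rg" using gm by (simp add: graded_module_def)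
lemma dR: "direct_grading Rg" using gm by (simp add: graded_module_def graded_ring_def)
lemma dM: "direct_grading Mg" using gm by (simp add: graded_module_def)
lemma mulR: "a \<in> Rg g \<Longrightarrow> b \<in> Rg h \<Longrightarrow> a * b \<in> Rg (g + h)"
  using gm by (simp add: graded_module_def graded_ring_def)
lemma mulM: "r \<in> Rg g \<Longrightarrow> m \<in> Mg h \<Longrightarrow> smult r m \<in> Mg (g + h)"
  using gm by (simp add: graded_module_def)
lemma modl: "module smult" using gm by (simp add: graded_module_def)
lemma sgR: "add_subgroup (Rg g)" using dR by (simp add: direct_grading_def)
lemma sgM: "add_subgroup (Mg g)" using dM by (simp add: direct_grading_def)

lemmas scale_sum_left = module.scale_sum_left[OF modl]
lemmas scale_sum_right = module.scale_sum_right[OF modl]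
lemmas scale_scale = module.scale_scale[OF modl]
lemmas scale_one = module.scale_one[OF modl]
lemmas scale_zero_left = module.scale_zero_left[OF modl]
lemmas scale_zero_right = module.scale_zero_right[OF modl]
lemmas scale_left_distrib = module.scale_left_distrib[OF modl]
lemmas scale_right_distrib = module.scale_right_distrib[OF modl]
lemmas scale_minus_left = module.scale_minus_left[OF modl]
lemmas scale_minus_right = module.scale_minus_right[OF modl]

lemma shiftR:
  assumes "r \<in> Rg h"
  shows "gcomp Rg (x * r) k = gcomp Rg x (k - h) * r"
proof -
  let ?c = "\<lambda>k. gcomp Rg x (k - h) * r"
  let ?T = "{g. gcomp Rg x g \<noteq> 0}"
  let ?S = "(\<lambda>g. g + h) ` ?T"
  have "gcomp Rg (x * r) = ?c"
  proof (rule gcomp_eqI[OF dR])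
    show "finite ?S" using gcomp_finite[OF dR] by simp
    show "{k. ?c k \<noteq> 0} \<subseteq> ?S"
    proof
      fix k assume "k \<in> {k. ?c k \<noteq> 0}"
      then have "gcomp Rg x (k - h) \<noteq> 0" by auto
      then show "k \<in> ?S" by (intro image_eqI[of _ _ "k - h"]) auto
    qed
    show "?c k \<in> Rg k" for k
      using mulR[OF gcomp_in[OF dR] assms, of x "k - h"] by simp
    have "x * r = (\<Sum>g\<in>?T. gcomp Rg x g) * r"
      by (rule arg_cong[where f="\<lambda>y. y * r", OF gcomp_sum0[OF dR]])
    also have "\<dots> = (\<Sum>g\<in>?T. gcomp Rg x g * r)" by (rule sum_distrib_right)
    also have "\<dots> = (\<Sum>k\<in>?S. ?c k)" by (subst sum.reindex) (auto simp: inj_on_def)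
    finally show "x * r = (\<Sum>k\<in>?S. ?c k)" .
  qed
  then show ?thesis by simp
qed

lemma shiftM:
  assumes "m \<in> Mg h"
  shows "gcomp Mg (smult r m) k = smult (gcomp Rg r (k - h)) m"
proof -
  let ?c = "\<lambda>k. smult (gcomp Rg r (k - h)) m"
  let ?T = "{g. gcomp Rg r g \<noteq> 0}"
  let ?S = "(\<lambda>g. g + h) ` ?T"
  have "gcomp Mg (smult r m) = ?c"
  proof (rule gcomp_eqI[OF dM])
    show "finite ?S" using gcomp_finite[OF dR] by simp
    show "{k. ?c k \<noteq> 0} \<subseteq> ?S"
    proof
      fix k assume "k \<in> {k. ?c k \<noteq> 0}"
      then have "gcomp Rg r (k - h) \<noteq> 0" using scale_zero_left by auto
      then show "k \<in> ?S" by (intro image_eqI[of _ _ "k - h"]) auto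
    qed
    show "?c k \<in> Mg k" for k
      using mulM[OF gcomp_in[OF dR] assms, of r "k - h"] by simp
    have "smult r m = smult (\<Sum>g\<in>?T. gcomp Rg r g) m"
      by (rule arg_cong[where f="\<lambda>y. smult y m", OF gcomp_sum0[OF dR]])
    also have "\<dots> = (\<Sum>g\<in>?T. smult (gcomp Rg r g) m)" by (rule scale_sum_left)
    also have "\<dots> = (\<Sum>k\<in>?S. ?c k)" by (subst sum.reindex) (auto simp: inj_on_def)
    finally show "smult r m = (\<Sum>k\<in>?S. ?c k)" .
  qed
  then show ?thesis by simp
qed

lemma e_mult:
  assumes "r \<in> Rg h"
  shows "gcomp Rg 1 g * r = (if g = 0 then r else 0)"
proof -
  have "gcomp Rg (1 * r) (g + h) = gcomp Rg 1 (g + h - h) * r" by (rule shiftR[OF assms])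
  moreover have "gcomp Rg r (g + h) = (if g + h = h then r else 0)"
    using gcomp_homog[OF dR assms] by simp
  moreover have "(g + h = h) = (g = 0)" by (metis add_0 add_right_cancel)
  ultimately show ?thesis by simp
qed

lemma one_R0: "1 \<in> Rg 0"
proof -
  let ?e = "gcomp Rg 1"
  have z: "?e g = 0" if "g \<noteq> 0" for g
  proof -
    let ?T = "{k. ?e k \<noteq> 0}"
    have s: "(\<Sum>k\<in>?T. ?e k) = 1" by (rule sym[OF gcomp_sum0[OF dR]])
    have "?e g = ?e g * (\<Sum>k\<in>?T. ?e k)" by (simp only: s mult_1_right)
    also have "\<dots> = (\<Sum>k\<in>?T. ?e g * ?e k)" by (rule sum_distrib_left)
    also have "\<dots> = 0" using e_mult[OF gcomp_in[OF dR]] that by simp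
    finally show ?thesis .
  qed
  have "1 = (\<Sum>k\<in>{0}. ?e k)" by (rule gcomp_sum[OF dR]) (use z in auto)
  then have "1 = ?e 0" by simp
  then show ?thesis using gcomp_in[OF dR, of 1 0] by simp
qed

lemma homog_iff: "a \<in> homog A \<longleftrightarrow> (\<exists>h. a \<in> A h)" by (simp add: homog_def)

lemma gcomp_homogR: "gcomp Rg x g \<in> homog Rg"
  using gcomp_in[OF dR] by (auto simp: homog_def)
lemma gcomp_homogM: "gcomp Mg x g \<in> homog Mg"
  using gcomp_in[OF dM] by (auto simp: homog_def)

lemma mult_homog: "a \<in> homog Rg \<Longrightarrow> b \<in> homog Rg \<Longrightarrow> a * b \<in> homog Rg"
  using mulR by (metis homog_iff)

lemma smult_homog: "a \<in> homog Rg \<Longrightarrow> m \<in> homog Mg \<Longrightarrow> smult a m \<in> homog Mg"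
  using mulM by (metis homog_iff)

lemma pow_homog: "a \<in> homog Rg \<Longrightarrow> a ^ n \<in> homog Rg"
proof (induction n)
  case 0 then show ?case using one_R0 by (auto simp: homog_def)
next
  case (Suc n) then show ?case using mult_homog by simp
qed

lemma Gr_homog:
  assumes "0 \<in> J" "y \<in> homog Rg"
  shows "y \<in> Gr Rg J \<longleftrightarrow> (\<exists>n>0. y ^ n \<in> J)"
proof -
  obtain h where h: "y \<in> Rg h" using assms(2) by (auto simp: homog_def)
  have gc: "gcomp Rg y = (\<lambda>g. if g = h then y else 0)" by (rule gcomp_homog[OF dR h])
  show ?thesis
  proof
    assume "y \<in> Gr Rg J"
    then have "\<exists>n>0. (gcomp Rg y h) ^ n \<in> J" unfolding Gr_def by blast
    then show "\<exists>n>0. y ^ n \<in> J" using gc by simp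
  next
    assume a: "\<exists>n>0. y ^ n \<in> J"
    have "\<exists>n>0. (gcomp Rg y g) ^ n \<in> J" for g
    proof (cases "g = h")
      case True then show ?thesis using a gc by simp
    next
      case False then show ?thesis using assms(1) gc by (intro exI[of _ 1]) simp
    qed
    then show "y \<in> Gr Rg J" unfolding Gr_def by blast
  qed
qed

lemma Gr_mono: "J \<subseteq> J' \<Longrightarrow> Gr Rg J \<subseteq> Gr Rg J'"
  unfolding Gr_def by blast

lemma colon_mono: "K \<subseteq> K' \<Longrightarrow> colon smult K \<subseteq> colon smult K'"
  unfolding colon_def by blast

lemma graded_ideal_sub_Gr: "graded_ideal Rg J \<Longrightarrow> J \<subseteq> Gr Rg J"
  unfolding Gr_def graded_ideal_def by (auto intro: exI[of _ 1])

lemma gprime_pow: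
  assumes "graded_prime_ideal Rg p" "y \<in> homog Rg" "y ^ n \<in> p"
  shows "y \<in> p"
  using assms(3)
proof (induction n)
  case 0
  then have "1 \<in> p" by simp
  then have "r * 1 \<in> p" for r using assms(1)
    by (simp add: graded_prime_ideal_def graded_ideal_def is_ideal_def del: mult_1_right)
  then have "p = UNIV" by auto
  then show ?case using assms(1) by (simp add: graded_prime_ideal_def)
next
  case (Suc n)
  then have "y * y ^ n \<in> p" by simp
  then have "y \<in> p \<or> y ^ n \<in> p" using assms(1,2) pow_homog[OF assms(2)]
    by (simp add: graded_prime_ideal_def)
  then show ?case using Suc by blast
qed

lemma Gr_prime_sub:
  assumes "graded_prime_ideal Rg p"
  shows "Gr Rg p \<subseteq> p"
proof
  fix x assume "x \<in> Gr Rg p"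
  then have "\<exists>n>0. (gcomp Rg x g) ^ n \<in> p" for g unfolding Gr_def by blast
  then have c: "gcomp Rg x g \<in> p" for g using gprime_pow[OF assms gcomp_homogR] by blast
  have sg: "add_subgroup p" using assms
    by (simp add: graded_prime_ideal_def graded_ideal_def is_ideal_def)
  have "(\<Sum>g\<in>{g. gcomp Rg x g \<noteq> 0}. gcomp Rg x g) \<in> p"
    by (rule add_subgroup_sum[OF sg]) (use c in auto)
  then show "x \<in> p" using gcomp_sum0[OF dR, of x] by simp
qed

lemma colon_ideal:
  assumes "is_submodule smult K"
  shows "is_ideal (colon smult K)"
  using assms
  unfolding is_ideal_def is_submodule_def add_subgroup_def colon_def
  by (simp add: scale_zero_left scale_left_distrib scale_minus_left scale_scale[symmetric])

lemma colon_graded: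
  assumes "graded_submodule Mg smult K"
  shows "graded_ideal Rg (colon smult K)"
proof -
  have sm: "is_submodule smult K" using assms by (simp add: graded_submodule_def)
  have sg: "add_subgroup K" using sm by (simp add: is_submodule_def)
  have "gcomp Rg r g \<in> colon smult K" if r: "r \<in> colon smult K" for r g
  proof -
    have "smult (gcomp Rg r g) m \<in> K" for m
    proof -
      have each: "smult (gcomp Rg r g) (gcomp Mg m h) \<in> K" for h
      proof -
        have "smult r (gcomp Mg m h) \<in> K" using r by (simp add: colon_def)
        then have "gcomp Mg (smult r (gcomp Mg m h)) (g + h) \<in> K"
          using assms by (simp add: graded_submodule_def)
        also have "gcomp Mg (smult r (gcomp Mg m h)) (g + h) = smult (gcomp Rg r g) (gcomp Mg m h)"
          using shiftM[OF gcomp_in[OF dM, of m h], of r "g + h"] by (simp add: add.assoc)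
        finally show ?thesis .
      qed
      have "smult (gcomp Rg r g) m = smult (gcomp Rg r g) (\<Sum>h\<in>{h. gcomp Mg m h \<noteq> 0}. gcomp Mg m h)"
        by (rule arg_cong[OF gcomp_sum0[OF dM]])
      also have "\<dots> = (\<Sum>h\<in>{h. gcomp Mg m h \<noteq> 0}. smult (gcomp Rg r g) (gcomp Mg m h))"
        by (rule scale_sum_right)
      also have "\<dots> \<in> K" by (rule add_subgroup_sum[OF sg]) (rule each)
      finally show ?thesis .
    qed
    then show ?thesis by (simp add: colon_def)
  qed
  then show ?thesis using colon_ideal[OF sm] by (simp add: graded_ideal_def)
qed

end


context GM
begin

lemma ideal_extend:
  assumes p: "graded_ideal Rg p" and a: "a \<in> Rg h"
  shows "graded_ideal Rg {x + r * a | x r. x \<in> p}"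
proof -
  let ?J = "{x + r * a | x r. x \<in> p}"
  have sg: "add_subgroup p" and mul: "\<And>r x. x \<in> p \<Longrightarrow> r * x \<in> p"
    and gc: "\<And>x g. x \<in> p \<Longrightarrow> gcomp Rg x g \<in> p"
    using p by (auto simp: graded_ideal_def is_ideal_def)
  have z: "0 \<in> p" and ad: "\<And>x y. x \<in> p \<Longrightarrow> y \<in> p \<Longrightarrow> x + y \<in> p"
    and ng: "\<And>x. x \<in> p \<Longrightarrow> - x \<in> p" using sg by (auto simp: add_subgroup_def)
  have f0: "0 \<in> ?J" using z by (intro CollectI exI[of _ 0]) simp
  have f1: "u + v \<in> ?J" if uv: "u \<in> ?J" "v \<in> ?J" for u v
  proof -
    obtain x1 r1 x2 r2 where "u = x1 + r1 * a" "v = x2 + r2 * a" "x1 \<in> p" "x2 \<in> p"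
      using uv by blast
    then have "u + v = (x1 + x2) + (r1 + r2) * a" "x1 + x2 \<in> p" using ad by (simp_all add: algebra_simps)
    then show ?thesis by blast
  qed
  have f2: "- u \<in> ?J" if uJ: "u \<in> ?J" for u
  proof -
    obtain x1 r1 where "u = x1 + r1 * a" "x1 \<in> p" using uJ by blast
    then have "- u = (- x1) + (- r1) * a" "- x1 \<in> p" using ng by (simp_all add: algebra_simps)
    then show ?thesis by blast
  qed
  have f3: "s * u \<in> ?J" if uJ: "u \<in> ?J" for u s
  proof -
    obtain x1 r1 where "u = x1 + r1 * a" "x1 \<in> p" using uJ by blast
    then have "s * u = s * x1 + (s * r1) * a" "s * x1 \<in> p" using mul by (simp add: algebra_simps, blast)
    then show ?thesis by blast
  qed
  have f4: "gcomp Rg u g \<in> ?J" if uJ: "u \<in> ?J" for u g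
  proof -
    obtain x1 r1 where u: "u = x1 + r1 * a" "x1 \<in> p" using uJ by blast
    have "gcomp Rg u g = gcomp Rg x1 g + gcomp Rg r1 (g - h) * a"
      using u(1) gcomp_add[OF dR, of x1 "r1 * a"] shiftR[OF a, of r1 g] by simp
    then show ?thesis using gc[OF u(2)] by blast
  qed
  show ?thesis
    unfolding graded_ideal_def is_ideal_def add_subgroup_def
    by (intro conjI ballI allI impI f0 f1 f2 f3 f4)
qed

lemma prime_avoid:
  assumes J: "graded_ideal Rg J" and y: "y \<in> homog Rg" and av: "\<forall>n>0. y ^ n \<notin> J"
  shows "\<exists>p. graded_prime_ideal Rg p \<and> J \<subseteq> p \<and> y \<notin> p"
proof -
  define F where "F = {I. graded_ideal Rg I \<and> J \<subseteq> I \<and> (\<forall>n>0. y ^ n \<notin> I)}"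
  have "F \<noteq> {}" using J av by (auto simp: F_def)
  moreover have "\<Union>C \<in> F" if C: "C \<noteq> {}" "subset.chain F C" for C
  proof -
    have CF: "C \<subseteq> F" and ch: "\<forall>X\<in>C. \<forall>Y\<in>C. X \<subseteq> Y \<or> Y \<subseteq> X"
      using C(2) by (auto simp: subset_chain_def)
    obtain I0 where I0: "I0 \<in> C" using C(1) by blast
    have gi: "graded_ideal Rg I" if "I \<in> C" for I using CF that by (auto simp: F_def)
    have f0: "0 \<in> \<Union>C" using gi[OF I0] I0 by (auto simp: graded_ideal_def is_ideal_def add_subgroup_def)
    have f1: "a + b \<in> \<Union>C" if ab: "a \<in> \<Union>C" "b \<in> \<Union>C" for a b
    proof -
      obtain A B where "A \<in> C" "B \<in> C" "a \<in> A" "b \<in> B" using ab by blast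
      then have "\<exists>X\<in>C. a \<in> X \<and> b \<in> X" using ch by blast
      then obtain X where X: "X \<in> C" "a \<in> X" "b \<in> X" by blast
      then show ?thesis using gi[OF X(1)] by (auto simp: graded_ideal_def is_ideal_def add_subgroup_def)
    qed
    have f2: "- a \<in> \<Union>C \<and> r * a \<in> \<Union>C \<and> gcomp Rg a g \<in> \<Union>C" if aC: "a \<in> \<Union>C" for a r g
    proof -
      obtain X where X: "X \<in> C" "a \<in> X" using aC by blast
      have "- a \<in> X" "r * a \<in> X" "gcomp Rg a g \<in> X"
        using gi[OF X(1)] X(2) unfolding graded_ideal_def is_ideal_def add_subgroup_def by auto
      then show ?thesis using X(1) by blast
    qed
    have f3: "J \<subseteq> \<Union>C" using I0 CF by (auto simp: F_def)
    have f4: "\<forall>n>0. y ^ n \<notin> \<Union>C" using CF by (auto simp: F_def)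
    have "graded_ideal Rg (\<Union>C)"
      unfolding graded_ideal_def is_ideal_def add_subgroup_def
    proof (intro conjI ballI allI impI)
      show "0 \<in> \<Union>C" by (rule f0)
      show "a + b \<in> \<Union>C" if "a \<in> \<Union>C" "b \<in> \<Union>C" for a b using f1 that by blast
      show "- a \<in> \<Union>C" if "a \<in> \<Union>C" for a using f2 that by blast
      show "r * a \<in> \<Union>C" if "a \<in> \<Union>C" for r a using f2 that by blast
      show "gcomp Rg a g \<in> \<Union>C" if "a \<in> \<Union>C" for g a using f2 that by blast
    qed
    then show ?thesis using f3 f4 by (simp add: F_def)
  qed
  ultimately obtain p where pF: "p \<in> F" and mx: "\<forall>X\<in>F. p \<subseteq> X \<longrightarrow> X = p"
    using subset_Zorn_nonempty[of F] by blast
  have gp: "graded_ideal Rg p" and Jp: "J \<subseteq> p" and avp: "\<forall>n>0. y ^ n \<notin> p"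
    using pF by (auto simp: F_def)
  have yp: "y \<notin> p" using avp by (metis power_one_right zero_less_one)
  have pmul: "\<And>r x. x \<in> p \<Longrightarrow> r * x \<in> p" and padd: "\<And>x y. x \<in> p \<Longrightarrow> y \<in> p \<Longrightarrow> x + y \<in> p"
    using gp by (auto simp: graded_ideal_def is_ideal_def add_subgroup_def)
  have key: "\<exists>n>0. \<exists>x\<in>p. \<exists>r. y ^ n = x + r * a" if a: "a \<in> homog Rg" "a \<notin> p" for a
  proof -
    obtain h where h: "a \<in> Rg h" using a(1) by (auto simp: homog_def)
    let ?Ja = "{x + r * a | x r. x \<in> p}"
    have gJ: "graded_ideal Rg ?Ja" by (rule ideal_extend[OF gp h])
    have pJ: "p \<subseteq> ?Ja"
    proof
      fix x assume "x \<in> p"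
      moreover have "x = x + 0 * a" by simp
      ultimately show "x \<in> ?Ja" by blast
    qed
    have "0 \<in> p" using gp by (simp add: graded_ideal_def is_ideal_def add_subgroup_def)
    moreover have "a = 0 + 1 * a" by simp
    ultimately have "a \<in> ?Ja" by blast
    then have "?Ja \<noteq> p" using a(2) by blast
    then have "?Ja \<notin> F" using mx pJ by blast
    then have "\<not> (\<forall>n>0. y ^ n \<notin> ?Ja)" using gJ Jp pJ by (auto simp: F_def)
    then show ?thesis by blast
  qed
  have "a \<in> p \<or> b \<in> p" if ab: "a \<in> homog Rg" "b \<in> homog Rg" "a * b \<in> p" for a b
  proof (rule ccontr)
    assume "\<not> (a \<in> p \<or> b \<in> p)"
    then have na: "a \<notin> p" and nb: "b \<notin> p" by auto
    obtain n x r where n: "n > 0" "x \<in> p" "y ^ n = x + r * a" using key[OF ab(1) na] by blast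
    obtain m x' s where m: "m > 0" "x' \<in> p" "y ^ m = x' + s * b" using key[OF ab(2) nb] by blast
    have "y ^ (n + m) = (x + r * a) * (x' + s * b)" using n(3) m(3) by (simp add: power_add)
    also have "\<dots> = x * (x' + s * b) + (r * a * x' + (r * s) * (a * b))" by (simp add: algebra_simps)
    also have "\<dots> \<in> p"
    proof (rule padd)
      show "x * (x' + s * b) \<in> p" using pmul[OF n(2), of "x' + s * b"] by (simp only: mult.commute)
      have "r * a * x' \<in> p" by (rule pmul[OF m(2)])
      moreover have "(r * s) * (a * b) \<in> p" using pmul[OF ab(3)] by simp
      ultimately show "r * a * x' + (r * s) * (a * b) \<in> p" by (rule padd)
    qed
    finally show False using avp n(1) by auto
  qed
  moreover have "p \<noteq> UNIV" using yp by blast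
  ultimately have "graded_prime_ideal Rg p" using gp unfolding graded_prime_ideal_def by blast
  then show ?thesis using Jp yp by blast
qed

end


context GM
begin

lemma spec_facts:
  assumes "Q \<in> qpSpec Rg Mg smult"
  shows "graded_submodule Mg smult Q" "Q \<noteq> UNIV" "graded_primeful Rg Mg smult Q"
    "graded_quasi_primary_submodule Rg Mg smult Q"
  using assms by (auto simp: qpSpec_def graded_quasi_primary_submodule_def)

lemma zero_colon: "graded_submodule Mg smult K \<Longrightarrow> 0 \<in> colon smult K"
  by (simp add: colon_def graded_submodule_def is_submodule_def add_subgroup_def scale_zero_left)

lemma one_h: "1 \<in> homog Rg" using one_R0 by (auto simp: homog_def)

lemma PA_M:
  assumes Q: "graded_submodule Mg smult Q" "graded_primeful Rg Mg smult Q"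
    and y: "y \<in> homog Rg" "y \<notin> Gr Rg (colon smult Q)"
  shows "\<exists>P. graded_prime_submodule Rg Mg smult P \<and> Q \<subseteq> P \<and> y \<notin> colon smult P
     \<and> graded_prime_ideal Rg (colon smult P)"
proof -
  have gi: "graded_ideal Rg (colon smult Q)" by (rule colon_graded[OF Q(1)])
  have z: "0 \<in> colon smult Q" by (rule zero_colon[OF Q(1)])
  have "\<forall>n>0. y ^ n \<notin> colon smult Q" using y Gr_homog[OF z y(1)] by blast
  then obtain p where p: "graded_prime_ideal Rg p" "colon smult Q \<subseteq> p" "y \<notin> p"
    using prime_avoid[OF gi y(1)] by blast
  then obtain P where "graded_prime_submodule Rg Mg smult P" "Q \<subseteq> P" "colon smult P = p"
    using Q(2) unfolding graded_primeful_def by blast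
  then show ?thesis using p by blast
qed

lemma pow_Gr:
  assumes "0 \<in> J" "a \<in> homog Rg" "n > 0" "a ^ n \<in> Gr Rg J"
  shows "a \<in> Gr Rg J"
proof -
  obtain k where "k > 0" "(a ^ n) ^ k \<in> J"
    using Gr_homog[OF assms(1) pow_homog[OF assms(2)]] assms(4) by blast
  then have "a ^ (n * k) \<in> J" "n * k > 0" using assms(3) by (simp_all add: power_mult)
  then show ?thesis using Gr_homog[OF assms(1,2)] by blast
qed

lemma qp_prime:
  assumes Q: "Q \<in> qpSpec Rg Mg smult" and a: "a \<in> homog Rg" and b: "b \<in> homog Rg"
    and ab: "a * b \<in> Gr Rg (colon smult Q)"
  shows "a \<in> Gr Rg (colon smult Q) \<or> b \<in> Gr Rg (colon smult Q)"
proof (rule disjCI)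
  assume nb: "b \<notin> Gr Rg (colon smult Q)"
  note sf = spec_facts[OF Q]
  have z: "0 \<in> colon smult Q" by (rule zero_colon[OF sf(1)])
  obtain n where n: "n > 0" "(a * b) ^ n \<in> colon smult Q"
    using Gr_homog[OF z mult_homog[OF a b]] ab by blast
  have nbn: "b ^ n \<notin> Gr Rg (colon smult Q)" using pow_Gr[OF z b n(1)] nb by blast
  obtain P where P: "graded_prime_submodule Rg Mg smult P" "Q \<subseteq> P" "b ^ n \<notin> colon smult P"
    using PA_M[OF sf(1) sf(3) pow_homog[OF b] nbn] by blast
  have gP: "graded_submodule Mg smult P" using P(1) by (simp add: graded_prime_submodule_def)
  have sgP: "add_subgroup P" using gP by (simp add: graded_submodule_def is_submodule_def)
  obtain m where m: "smult (b ^ n) m \<notin> P" using P(3) by (auto simp: colon_def)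
  have "\<exists>h. smult (b ^ n) (gcomp Mg m h) \<notin> P"
  proof (rule ccontr)
    assume "\<not> ?thesis"
    then have "(\<Sum>h\<in>{h. gcomp Mg m h \<noteq> 0}. smult (b ^ n) (gcomp Mg m h)) \<in> P"
      by (intro add_subgroup_sum[OF sgP]) blast
    then have "smult (b ^ n) (\<Sum>h\<in>{h. gcomp Mg m h \<noteq> 0}. gcomp Mg m h) \<in> P"
      by (simp add: scale_sum_right)
    then have "smult (b ^ n) m \<in> P" by (simp only: sym[OF gcomp_sum0[OF dM, of m]])
    then show False using m by blast
  qed
  then obtain h where h: "smult (b ^ n) (gcomp Mg m h) \<notin> P" by blast
  let ?m = "smult (b ^ n) (gcomp Mg m h)"
  have "smult (a ^ n) ?m = smult ((a * b) ^ n) (gcomp Mg m h)"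
    by (simp add: scale_scale power_mult_distrib)
  also have "\<dots> \<in> Q" using n(2) by (simp add: colon_def)
  finally have in_Q: "smult (a ^ n) ?m \<in> Q" .
  have mh: "?m \<in> homog Mg" by (rule smult_homog[OF pow_homog[OF b] gcomp_homogM])
  have "a ^ n \<in> Gr Rg (colon smult Q) \<or> ?m \<in> GrM Rg Mg smult Q"
    using sf(4) pow_homog[OF a] mh in_Q unfolding graded_quasi_primary_submodule_def by blast
  moreover have "?m \<notin> GrM Rg Mg smult Q" using h P(1,2) unfolding GrM_def by blast
  ultimately have "a ^ n \<in> Gr Rg (colon smult Q)" by blast
  then show "a \<in> Gr Rg (colon smult Q)" by (rule pow_Gr[OF z a n(1)])
qed

definition Kc :: "'m set \<Rightarrow> 'r \<Rightarrow> 'm set" where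
  "Kc K a = \<Inter>{P. graded_prime_submodule Rg Mg smult P \<and> colon smult K \<subseteq> colon smult P
      \<and> a \<in> colon smult P}"

lemma inter_graded:
  assumes "\<forall>P\<in>F. graded_submodule Mg smult P"
  shows "graded_submodule Mg smult (\<Inter>F)"
  unfolding graded_submodule_def is_submodule_def add_subgroup_def
  apply (intro conjI ballI allI impI InterI)
  using assms by (simp_all add: graded_submodule_def is_submodule_def add_subgroup_def)

lemma Kc_graded: "graded_submodule Mg smult (Kc K a)"
  unfolding Kc_def by (rule inter_graded) (auto simp: graded_prime_submodule_def)

lemma colon_Kc: "colon smult K \<subseteq> colon smult (Kc K a)" "a \<in> colon smult (Kc K a)"
proof -
  show "colon smult K \<subseteq> colon smult (Kc K a)"
  proof
    fix r assume r: "r \<in> colon smult K"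
    have "smult r m \<in> Kc K a" for m
      unfolding Kc_def
    proof (rule InterI)
      fix P assume "P \<in> {P. graded_prime_submodule Rg Mg smult P \<and> colon smult K \<subseteq> colon smult P
        \<and> a \<in> colon smult P}"
      then have "r \<in> colon smult P" using r by blast
      then show "smult r m \<in> P" by (simp add: colon_def)
    qed
    then show "r \<in> colon smult (Kc K a)" by (simp add: colon_def)
  qed
  have "smult a m \<in> Kc K a" for m
    unfolding Kc_def
  proof (rule InterI)
    fix P assume "P \<in> {P. graded_prime_submodule Rg Mg smult P \<and> colon smult K \<subseteq> colon smult P
      \<and> a \<in> colon smult P}"
    then have "a \<in> colon smult P" by blast
    then show "smult a m \<in> P" by (simp add: colon_def)
  qed
  then show "a \<in> colon smult (Kc K a)" by (simp add: colon_def)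
qed

lemma V1:
  assumes K: "graded_submodule Mg smult K" and Q: "Q \<in> qpSpec Rg Mg smult" and a: "a \<in> homog Rg"
  shows "Q \<in> qpV Rg Mg smult (Kc K a) \<longleftrightarrow>
    Q \<in> qpV Rg Mg smult K \<and> a \<in> Gr Rg (colon smult Q)"
proof
  have zK: "0 \<in> colon smult (Kc K a)" by (rule zero_colon[OF Kc_graded])
  assume L: "Q \<in> qpV Rg Mg smult (Kc K a)"
  then have sub: "Gr Rg (colon smult (Kc K a)) \<subseteq> Gr Rg (colon smult Q)" by (simp add: qpV_def)
  have "Gr Rg (colon smult K) \<subseteq> Gr Rg (colon smult (Kc K a))" by (rule Gr_mono[OF colon_Kc(1)])
  moreover have "a \<in> Gr Rg (colon smult (Kc K a))"
  proof -
    have "a ^ 1 \<in> colon smult (Kc K a)" using colon_Kc(2) by simp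
    then show ?thesis using Gr_homog[OF zK a] by blast
  qed
  ultimately show "Q \<in> qpV Rg Mg smult K \<and> a \<in> Gr Rg (colon smult Q)"
    using sub Q by (auto simp: qpV_def)
next
  assume R: "Q \<in> qpV Rg Mg smult K \<and> a \<in> Gr Rg (colon smult Q)"
  note sf = spec_facts[OF Q]
  have zQ: "0 \<in> colon smult Q" by (rule zero_colon[OF sf(1)])
  have IQ: "Gr Rg (colon smult K) \<subseteq> Gr Rg (colon smult Q)" using R by (simp add: qpV_def)
  have "x \<in> Gr Rg (colon smult Q)" if x: "x \<in> Gr Rg (colon smult (Kc K a))" for x
  proof -
    have "\<exists>k>0. (gcomp Rg x g) ^ k \<in> colon smult Q" for g
    proof -
      let ?y = "gcomp Rg x g"
      have yh: "?y \<in> homog Rg" by (rule gcomp_homogR)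
      obtain n where n: "n > 0" "?y ^ n \<in> colon smult (Kc K a)" using x unfolding Gr_def by blast
      have "?y \<in> Gr Rg (colon smult Q)"
      proof (rule ccontr)
        assume ny: "?y \<notin> Gr Rg (colon smult Q)"
        obtain P where P: "graded_prime_submodule Rg Mg smult P" "Q \<subseteq> P" "?y \<notin> colon smult P"
          "graded_prime_ideal Rg (colon smult P)"
          using PA_M[OF sf(1) sf(3) yh ny] by blast
        have GP: "Gr Rg (colon smult Q) \<subseteq> colon smult P"
          using Gr_mono[OF colon_mono[OF P(2)]] Gr_prime_sub[OF P(4)] by blast
        have "colon smult K \<subseteq> colon smult P"
          using graded_ideal_sub_Gr[OF colon_graded[OF K]] IQ GP by blast
        moreover have "a \<in> colon smult P" using R GP by blast
        ultimately have "Kc K a \<subseteq> P" using P(1) unfolding Kc_def by blast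
        then have "?y ^ n \<in> colon smult P" using n(2) colon_mono by blast
        then have "?y \<in> colon smult P" by (rule gprime_pow[OF P(4) yh])
        then show False using P(3) by blast
      qed
      then show ?thesis using Gr_homog[OF zQ yh] by blast
    qed
    then show ?thesis unfolding Gr_def by blast
  qed
  then show "Q \<in> qpV Rg Mg smult (Kc K a)" using Q by (auto simp: qpV_def)
qed

end


context GM
begin

lemma forward:
  assumes qpf: "quasi_primaryful Rg Mg smult"
    and irr: "qp_irreducible Rg Mg smult Y" and cl: "qp_closed Rg Mg smult Y"
  shows "\<exists>Q\<in>qpSpec Rg Mg smult. Y = qpV Rg Mg smult Q"
proof -
  obtain K where K: "graded_submodule Mg smult K" and YK: "Y = qpV Rg Mg smult K"
    using cl by (auto simp: qp_closed_def)
  have Yne: "Y \<noteq> {}" using irr by (simp add: qp_irreducible_def)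
  then obtain Q' where Q': "Q' \<in> Y" by blast
  have Q'S: "Q' \<in> qpSpec Rg Mg smult" and IQ': "Gr Rg (colon smult K) \<subseteq> Gr Rg (colon smult Q')"
    using Q' YK by (auto simp: qpV_def)
  note sf' = spec_facts[OF Q'S]
  have M0: "(UNIV::'m set) \<noteq> {0}"
  proof
    assume U: "(UNIV::'m set) = {0}"
    have "0 \<in> Q'" using sf'(1) by (simp add: graded_submodule_def is_submodule_def add_subgroup_def)
    moreover have "x = 0" for x :: 'm using U by (metis UNIV_I singletonD)
    ultimately have "Q' = UNIV" by (metis UNIV_eq_I)
    then show False using sf'(2) by simp
  qed
  have qp: "\<And>q. graded_quasi_primary_ideal Rg q \<Longrightarrow> colon smult {0} \<subseteq> q \<Longrightarrow>
      (\<exists>Q\<in>qpSpec Rg Mg smult. Gr Rg (colon smult Q) = Gr Rg q)"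
    using qpf M0 by (simp add: quasi_primaryful_def)
  let ?q = "colon smult K"
  have gq: "graded_ideal Rg ?q" by (rule colon_graded[OF K])
  have zq: "0 \<in> ?q" by (rule zero_colon[OF K])
  have "{0} \<subseteq> K" using K by (simp add: graded_submodule_def is_submodule_def add_subgroup_def)
  then have ann: "colon smult {0} \<subseteq> ?q" by (rule colon_mono)
  have zQ': "0 \<in> colon smult Q'" by (rule zero_colon[OF sf'(1)])
  have proper: "?q \<noteq> UNIV"
  proof
    assume "?q = UNIV"
    then have "1 ^ 1 \<in> ?q" by simp
    then have "1 \<in> Gr Rg ?q" using Gr_homog[OF zq one_h] by blast
    then have "1 \<in> Gr Rg (colon smult Q')" using IQ' by blast
    then obtain n where "n > 0" "1 ^ n \<in> colon smult Q'" using Gr_homog[OF zQ' one_h] by blast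
    then have "\<forall>m. m \<in> Q'" by (simp add: colon_def scale_one)
    then show False using sf'(2) by blast
  qed
  have C: "\<exists>Q1\<in>Y. c \<notin> Gr Rg (colon smult Q1)" if c: "c \<in> homog Rg" "c \<notin> Gr Rg ?q" for c
  proof -
    have "\<forall>n>0. c ^ n \<notin> ?q" using Gr_homog[OF zq c(1)] c(2) by blast
    then obtain p where p: "graded_prime_ideal Rg p" "?q \<subseteq> p" "c \<notin> p"
      using prime_avoid[OF gq c(1)] by blast
    have gqp: "graded_quasi_primary_ideal Rg p"
      using p(1) graded_ideal_sub_Gr unfolding graded_prime_ideal_def graded_quasi_primary_ideal_def
      by blast
    obtain Q1 where Q1: "Q1 \<in> qpSpec Rg Mg smult" "Gr Rg (colon smult Q1) = Gr Rg p"
      using qp[OF gqp] ann p(2) by blast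
    have "Gr Rg ?q \<subseteq> Gr Rg p" by (rule Gr_mono[OF p(2)])
    then have "Q1 \<in> Y" using Q1 YK by (simp add: qpV_def)
    moreover have "c \<notin> Gr Rg (colon smult Q1)" using Q1(2) Gr_prime_sub[OF p(1)] p(3) by blast
    ultimately show ?thesis by blast
  qed
  have qprim: "\<forall>a\<in>homog Rg. \<forall>b\<in>homog Rg. a * b \<in> ?q \<longrightarrow> a \<in> Gr Rg ?q \<or> b \<in> Gr Rg ?q"
  proof (intro ballI impI)
    fix a b assume a: "a \<in> homog Rg" and b: "b \<in> homog Rg" and ab: "a * b \<in> ?q"
    show "a \<in> Gr Rg ?q \<or> b \<in> Gr Rg ?q"
    proof (rule ccontr)
      assume "\<not> (a \<in> Gr Rg ?q \<or> b \<in> Gr Rg ?q)"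
      then have na: "a \<notin> Gr Rg ?q" and nb: "b \<notin> Gr Rg ?q" by auto
      have "(a * b) ^ 1 \<in> ?q" using ab by simp
      then have abG: "a * b \<in> Gr Rg ?q" using Gr_homog[OF zq mult_homog[OF a b]] by blast
      have "Y \<subseteq> qpV Rg Mg smult (Kc K a) \<union> qpV Rg Mg smult (Kc K b)"
      proof
        fix Q assume QY: "Q \<in> Y"
        then have QS: "Q \<in> qpSpec Rg Mg smult" and QK: "Q \<in> qpV Rg Mg smult K"
          using YK by (auto simp: qpV_def)
        have "a * b \<in> Gr Rg (colon smult Q)" using abG QK by (auto simp: qpV_def)
        then have "a \<in> Gr Rg (colon smult Q) \<or> b \<in> Gr Rg (colon smult Q)" by (rule qp_prime[OF QS a b])
        then show "Q \<in> qpV Rg Mg smult (Kc K a) \<union> qpV Rg Mg smult (Kc K b)"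
          using V1[OF K QS a] V1[OF K QS b] QK by blast
      qed
      moreover have "qp_closed Rg Mg smult (qpV Rg Mg smult (Kc K a))"
        "qp_closed Rg Mg smult (qpV Rg Mg smult (Kc K b))"
        using Kc_graded by (auto simp: qp_closed_def)
      ultimately have "Y \<subseteq> qpV Rg Mg smult (Kc K a) \<or> Y \<subseteq> qpV Rg Mg smult (Kc K b)"
        using irr unfolding qp_irreducible_def by blast
      then show False
      proof
        assume sub: "Y \<subseteq> qpV Rg Mg smult (Kc K a)"
        obtain Q1 where Q1: "Q1 \<in> Y" "a \<notin> Gr Rg (colon smult Q1)" using C[OF a na] by blast
        have Q1S: "Q1 \<in> qpSpec Rg Mg smult" using Q1(1) YK by (simp add: qpV_def)
        have "Q1 \<in> qpV Rg Mg smult (Kc K a)" using sub Q1(1) by blast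
        then show False using V1[OF K Q1S a] Q1(2) by blast
      next
        assume sub: "Y \<subseteq> qpV Rg Mg smult (Kc K b)"
        obtain Q1 where Q1: "Q1 \<in> Y" "b \<notin> Gr Rg (colon smult Q1)" using C[OF b nb] by blast
        have Q1S: "Q1 \<in> qpSpec Rg Mg smult" using Q1(1) YK by (simp add: qpV_def)
        have "Q1 \<in> qpV Rg Mg smult (Kc K b)" using sub Q1(1) by blast
        then show False using V1[OF K Q1S b] Q1(2) by blast
      qed
    qed
  qed
  have "graded_quasi_primary_ideal Rg ?q"
    using gq proper qprim unfolding graded_quasi_primary_ideal_def by blast
  then obtain Q0 where Q0: "Q0 \<in> qpSpec Rg Mg smult" "Gr Rg (colon smult Q0) = Gr Rg ?q"
    using qp ann by blast
  have "Y = qpV Rg Mg smult Q0" using YK Q0(2) by (simp add: qpV_def)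
  then show ?thesis using Q0(1) by blast
qed

lemma backward:
  assumes Q: "Q \<in> qpSpec Rg Mg smult" and Y: "Y = qpV Rg Mg smult Q"
  shows "qp_irreducible Rg Mg smult Y \<and> qp_closed Rg Mg smult Y"
proof
  have QY: "Q \<in> Y" using Q Y by (simp add: qpV_def)
  show "qp_closed Rg Mg smult Y" using spec_facts(1)[OF Q] Y by (auto simp: qp_closed_def)
  have "Y \<subseteq> A1 \<or> Y \<subseteq> A2" if A: "qp_closed Rg Mg smult A1" "qp_closed Rg Mg smult A2"
    "Y \<subseteq> A1 \<union> A2" for A1 A2
  proof -
    have gen: "Y \<subseteq> A" if AA: "qp_closed Rg Mg smult A" "Q \<in> A" for A
    proof -
      obtain K where K: "A = qpV Rg Mg smult K" using AA(1) by (auto simp: qp_closed_def)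
      have "Gr Rg (colon smult K) \<subseteq> Gr Rg (colon smult Q)" using AA(2) K by (simp add: qpV_def)
      then show ?thesis using Y K by (auto simp: qpV_def)
    qed
    have "Q \<in> A1 \<or> Q \<in> A2" using QY A(3) by blast
    then show ?thesis using gen A(1,2) by blast
  qed
  then show "qp_irreducible Rg Mg smult Y" using QY unfolding qp_irreducible_def by blast
qed

lemma generic:
  assumes Q: "Q \<in> qpSpec Rg Mg smult" and Y: "Y = qpV Rg Mg smult Q"
  shows "\<exists>y\<in>Y. Y = qp_closure Rg Mg smult {y}"
proof
  show QY: "Q \<in> Y" using Q Y by (simp add: qpV_def)
  have cl: "qp_closed Rg Mg smult Y" using spec_facts(1)[OF Q] Y by (auto simp: qp_closed_def)
  show "Y = qp_closure Rg Mg smult {Q}"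
  proof
    show "qp_closure Rg Mg smult {Q} \<subseteq> Y" using cl QY unfolding qp_closure_def by blast
    show "Y \<subseteq> qp_closure Rg Mg smult {Q}"
      unfolding qp_closure_def
    proof (rule Inter_greatest)
      fix Z assume "Z \<in> {Z. qp_closed Rg Mg smult Z \<and> {Q} \<subseteq> Z}"
      then have Z: "qp_closed Rg Mg smult Z" "Q \<in> Z" by auto
      obtain K where K: "Z = qpV Rg Mg smult K" using Z(1) by (auto simp: qp_closed_def)
      have "Gr Rg (colon smult K) \<subseteq> Gr Rg (colon smult Q)" using Z(2) K by (simp add: qpV_def)
      then show "Y \<subseteq> Z" using Y K by (auto simp: qpV_def)
    qed
  qed
qed

end

theorem theorem4p9:
  fixes Rg :: "'g::group_add \<Rightarrow> 'r::comm_ring_1 set"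
    and Mg :: "'g \<Rightarrow> 'm::ab_group_add set"
    and smult :: "'r \<Rightarrow> 'm \<Rightarrow> 'm"
    and Y :: "'m set set"
  assumes "graded_module Rg Mg smult"
    and "quasi_primaryful Rg Mg smult"
    and "Y \<subseteq> qpSpec Rg Mg smult"
  shows "(qp_irreducible Rg Mg smult Y \<and> qp_closed Rg Mg smult Y \<longleftrightarrow>
            (\<exists>Q\<in>qpSpec Rg Mg smult. Y = qpV Rg Mg smult Q))
         \<and> (qp_irreducible Rg Mg smult Y \<and> qp_closed Rg Mg smult Y \<longrightarrow>
            (\<exists>y\<in>Y. Y = qp_closure Rg Mg smult {y}))"
proof -
  interpret GM Rg Mg smult by (rule GM.intro[OF assms(1)])
  show ?thesis
    using forward[OF assms(2)] backward generic by blast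
qed

end
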